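(* For $|q|<1$, $$\sum_{n=0}^\infty\frac{(-1)^n(q;q^2)_{2n}\,q^{2n^2}}{(q^8;q^8)_n(-q^2;q^4)_{n}}=(-q^3,-q^5,q^8;q^8)_\infty\frac{(q^2;q^4)_\infty}{(q^4;q^4)_\infty}.$$
   Context: $(a;q)_n=\prod_{k=0}^{n-1}(1-aq^k)$, $(a;q)_\infty=\prod_{k\ge0}(1-aq^k)$, $(a_1,\dots,a_r;q)_\infty=\prod_i(a_i;q)_\infty$. *)

theory Defs
  imports "HOL-Analysis.Analysis"
begin

definition qpoch :: "complex \<Rightarrow> complex \<Rightarrow> nat \<Rightarrow> complex" where
  "qpoch a q n = (\<Prod>k<n. 1 - a * q ^ k)"

definition qpoch_inf :: "complex \<Rightarrow> complex \<Rightarrow> complex" where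
  "qpoch_inf a q = (\<Prod>k. 1 - a * q ^ k)"

end

theory Submission
  imports Defs
begin

lemma qpoch_Suc: "qpoch x y (Suc n) = qpoch x y n * (1 - x * y ^ n)"
  by (simp add: qpoch_def)

lemma qpoch_0[simp]: "qpoch x y 0 = 1"
  by (simp add: qpoch_def)

lemma qpoch_conv:
  fixes x y :: complex
  assumes "norm y < 1"
  shows "convergent_prod (\<lambda>k. 1 - x * y ^ k)"
proof -
  have "summable (\<lambda>k. norm (x * y ^ k))"
  proof -
    have "summable (\<lambda>k. norm x * norm y ^ k)"
      by (rule summable_mult, rule summable_geometric) (use assms in simp)
    thus ?thesis by (simp only: norm_mult norm_power)
  qed
  hence "summable (\<lambda>k. norm ((1 - x * y ^ k) - 1))"
    by (simp add: norm_mult norm_power)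
  thus ?thesis
    by (intro abs_convergent_prod_imp_convergent_prod summable_imp_abs_convergent_prod)
qed

lemma qpoch_lim:
  assumes "norm y < 1"
  shows "(\<lambda>N. qpoch x y N) \<longlonglongrightarrow> qpoch_inf x y"
proof -
  have "(\<lambda>n. \<Prod>i\<le>n. 1 - x * y ^ i) \<longlonglongrightarrow> qpoch_inf x y"
    unfolding qpoch_inf_def by (rule convergent_prod_LIMSEQ[OF qpoch_conv[OF assms]])
  hence "(\<lambda>n. qpoch x y (Suc n)) \<longlonglongrightarrow> qpoch_inf x y"
    by (simp add: qpoch_def lessThan_Suc_atMost)
  thus ?thesis by (rule LIMSEQ_imp_Suc)
qed

lemma qpoch_inf_nz:
  assumes "norm y < 1" "\<And>k. x * y ^ k \<noteq> 1"
  shows "qpoch_inf x y \<noteq> 0"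
  unfolding qpoch_inf_def using assms by (intro prodinf_nonzero qpoch_conv) auto

lemma qpoch_nz:
  fixes x y :: complex
  assumes "norm x < 1" "norm y \<le> 1"
  shows "qpoch x y n \<noteq> 0"
proof -
  have "x * y ^ k \<noteq> 1" for k
  proof -
    have "norm (x * y ^ k) = norm x * norm y ^ k" by (simp add: norm_mult norm_power)
    also have "\<dots> \<le> norm x * 1"
      using assms by (intro mult_left_mono power_le_one) auto
    finally show ?thesis using assms by auto
  qed
  thus ?thesis unfolding qpoch_def by (auto simp: prod_zero_iff)
qed

lemma qpoch_lower:
  fixes x y :: complex
  assumes "norm x \<le> r" "norm y \<le> 1" "r < 1"
  shows "(1 - r) ^ n \<le> norm (qpoch x y n)"
proof (induction n)
  case 0 then show ?case by simp
next
  case (Suc n)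
  have "norm (x * y ^ n) \<le> r"
  proof -
    have "norm (x * y ^ n) = norm x * norm y ^ n" by (simp add: norm_mult norm_power)
    also have "\<dots> \<le> norm x * 1"
      using assms by (intro mult_left_mono power_le_one) auto
    finally show ?thesis using assms by auto
  qed
  hence h: "1 - r \<le> norm (1 - x * y ^ n)"
    using norm_triangle_ineq2[of 1 "x * y ^ n"] by simp
  have "(1 - r) ^ Suc n = (1 - r) ^ n * (1 - r)" by simp
  also have "\<dots> \<le> norm (qpoch x y n) * norm (1 - x * y ^ n)"
    using Suc h assms by (intro mult_mono) auto
  also have "\<dots> = norm (qpoch x y (Suc n))" by (simp add: qpoch_Suc norm_mult)
  finally show ?case .
qed

lemma tri_Suc: "Suc n * (Suc n - 1) div 2 = n * (n - 1) div 2 + n"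
proof -
  have "Suc n * (Suc n - 1) = n * (n - 1) + 2 * n" by (cases n) (auto simp: algebra_simps)
  thus ?thesis by simp
qed

definition Ac :: "complex \<Rightarrow> complex \<Rightarrow> complex \<Rightarrow> nat \<Rightarrow> complex" where
  "Ac a b p n = qpoch a p n * qpoch b p n * p ^ (n * (n - 1) div 2) / qpoch (p^2) (p^2) n"

definition uu :: "complex \<Rightarrow> complex \<Rightarrow> complex \<Rightarrow> complex \<Rightarrow> nat \<Rightarrow> complex" where
  "uu a b p x n = Ac a b p n * x ^ n / qpoch x p n"

definition FF :: "complex \<Rightarrow> complex \<Rightarrow> complex \<Rightarrow> complex \<Rightarrow> complex" where
  "FF a b p x = suminf (uu a b p x)"

lemma Ac_Suc:
  assumes "norm p < 1"
  shows "Ac a b p (Suc n) = Ac a b p n * ((1 - a * p ^ n) * (1 - b * p ^ n) * p ^ n / (1 - p^2 * (p^2) ^ n))"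
proof -
  have "norm (p^2) < 1" using assms by (simp add: norm_power power_less_one_iff)
  hence nz: "qpoch (p^2) (p^2) n \<noteq> 0" "qpoch (p^2) (p^2) (Suc n) \<noteq> 0"
    by (intro qpoch_nz; simp)+
  hence "1 - p^2 * (p^2) ^ n \<noteq> 0" by (simp add: qpoch_Suc)
  thus ?thesis using nz unfolding Ac_def tri_Suc
    by (simp add: qpoch_Suc power_add field_simps)
qed


lemma qpoch_nz2:
  fixes x p :: complex
  assumes "norm x < 1" "norm p < 1"
  shows "qpoch x p n \<noteq> 0"
  using assms by (intro qpoch_nz) auto

lemma uu_Suc:
  assumes "norm p < 1" "norm x < 1"
  shows "uu a b p x (Suc n) = uu a b p x n *
     ((1 - a * p ^ n) * (1 - b * p ^ n) * p ^ n * x / ((1 - p^2 * (p^2) ^ n) * (1 - x * p ^ n)))"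
proof -
  have "norm (p^2) < 1" using assms by (simp add: norm_power power_less_one_iff)
  hence nz: "qpoch (p^2) (p^2) (Suc n) \<noteq> 0" by (intro qpoch_nz2)
  hence nz1: "1 - p^2 * (p^2) ^ n \<noteq> 0" by (simp add: qpoch_Suc)
  have nz2: "qpoch x p (Suc n) \<noteq> 0" using assms by (intro qpoch_nz2)
  hence nz3: "qpoch x p n \<noteq> 0" "1 - x * p ^ n \<noteq> 0" by (auto simp: qpoch_Suc)
  show ?thesis using nz1 nz3 unfolding uu_def Ac_Suc[OF assms(1)]
    by (simp add: qpoch_Suc field_simps)
qed

lemma qpoch_shift2:
  "qpoch x p (Suc (Suc n)) = (1 - x) * (1 - x * p) * qpoch (x * p^2) p n"
proof (induction n)
  case 0 then show ?case by (simp add: qpoch_Suc)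
next
  case (Suc n)
  have "qpoch x p (Suc (Suc (Suc n))) = qpoch x p (Suc (Suc n)) * (1 - x * p ^ Suc (Suc n))"
    by (rule qpoch_Suc)
  also have "\<dots> = (1 - x) * (1 - x * p) * (qpoch (x * p^2) p n * (1 - x * p^2 * p ^ n))"
    unfolding Suc by (simp add: power2_eq_square mult.assoc)
  also have "\<dots> = (1 - x) * (1 - x * p) * qpoch (x * p^2) p (Suc n)"
    by (simp add: qpoch_Suc)
  finally show ?case .
qed

lemma uu_shift:
  assumes "norm p < 1" "norm x < 1"
  shows "uu a b p (x * p^2) n = uu a b p x n *
     ((p ^ n)^2 * (1 - x) * (1 - x * p) / ((1 - x * p ^ n) * (1 - x * p * p ^ n)))"
proof -
  have nz: "qpoch x p (Suc (Suc n)) \<noteq> 0" using assms by (intro qpoch_nz2)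
  hence nz1: "qpoch x p n \<noteq> 0" "1 - x * p ^ n \<noteq> 0" "1 - x * p * p ^ n \<noteq> 0"
    by (auto simp: qpoch_Suc mult.assoc)
  have nz2: "1 - x \<noteq> 0" "1 - x * p \<noteq> 0" using nz by (auto simp: qpoch_shift2)
  have e: "qpoch (x * p^2) p n = qpoch x p n * (1 - x * p ^ n) * (1 - x * p * p ^ n) / ((1 - x) * (1 - x * p))"
  proof -
    have h: "qpoch x p n * (1 - x * p ^ n) * (1 - x * p * p ^ n) = ((1 - x) * (1 - x * p)) * qpoch (x * p^2) p n"
      using qpoch_shift2[of x p n] unfolding qpoch_Suc by (simp add: ac_simps)
    have "((1 - x) * (1 - x * p)) \<noteq> 0" using nz2 by simp
    thus ?thesis unfolding h by simp
  qed
  show ?thesis unfolding uu_def e using nz1 nz2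
    by (simp add: field_simps power_mult_distrib power_mult[symmetric] mult.commute)
qed


lemma rho_lim:
  fixes a b p :: complex
  assumes "norm p < 1"
  shows "(\<lambda>n. (1 - a * p ^ n) * (1 - b * p ^ n) * p ^ n / (1 - p^2 * (p^2) ^ n)) \<longlonglongrightarrow> 0"
proof -
  have l1: "(\<lambda>n. p ^ n) \<longlonglongrightarrow> 0" using assms by (rule LIMSEQ_power_zero)
  have "norm (p^2) < 1" using assms by (simp add: norm_power power_less_one_iff)
  hence l2: "(\<lambda>n. (p^2) ^ n) \<longlonglongrightarrow> 0" by (rule LIMSEQ_power_zero)
  have "(\<lambda>n. (1 - a * p ^ n) * (1 - b * p ^ n) * p ^ n / (1 - p^2 * (p^2) ^ n))
        \<longlonglongrightarrow> (1 - a * 0) * (1 - b * 0) * 0 / (1 - p^2 * 0)"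
    by (intro tendsto_intros l1 l2) simp
  thus ?thesis by simp
qed

lemma M_summable:
  assumes "norm p < 1" "0 \<le> t"
  shows "summable (\<lambda>n. norm (Ac a b p n) * t ^ n)"
proof -
  define rho where "rho n = (1 - a * p ^ n) * (1 - b * p ^ n) * p ^ n / (1 - p^2 * (p^2) ^ n)" for n
  have "(\<lambda>n. norm (rho n) * t) \<longlonglongrightarrow> norm (0::complex) * t"
    unfolding rho_def by (intro tendsto_intros rho_lim assms)
  hence "\<forall>\<^sub>F n in sequentially. norm (rho n) * t < 1/2"
    by (intro order_tendstoD(2)) auto
  then obtain N where N: "\<And>n. n \<ge> N \<Longrightarrow> norm (rho n) * t < 1/2"
    by (auto simp: eventually_sequentially)
  show ?thesis
  proof (rule summable_ratio_test[of "1/2" N])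
    fix n assume "n \<ge> N"
    have "norm (norm (Ac a b p (Suc n)) * t ^ Suc n) = (norm (Ac a b p n) * t ^ n) * (norm (rho n) * t)"
    proof -
      have "Ac a b p (Suc n) = Ac a b p n * rho n" unfolding rho_def by (rule Ac_Suc[OF assms(1)])
      thus ?thesis using assms by (simp add: norm_mult mult_ac)
    qed
    also have "\<dots> \<le> (norm (Ac a b p n) * t ^ n) * (1/2)"
      using N[OF \<open>n \<ge> N\<close>] assms by (intro mult_left_mono) auto
    finally show "norm (norm (Ac a b p (Suc n)) * t ^ Suc n) \<le> 1/2 * norm (norm (Ac a b p n) * t ^ n)"
      using assms by (simp add: mult.commute)
  qed simp
qed

lemma uu_bound:
  assumes "norm p < 1" "norm x \<le> r" "r < 1"
  shows "norm (uu a b p x n) \<le> norm (Ac a b p n) * (r / (1 - r)) ^ n"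
proof -
  have "norm (uu a b p x n) = norm (Ac a b p n) * norm x ^ n / norm (qpoch x p n)"
    by (simp add: uu_def norm_mult norm_divide norm_power)
  also have "\<dots> \<le> norm (Ac a b p n) * r ^ n / (1 - r) ^ n"
  proof (rule frac_le)
    show "norm (Ac a b p n) * norm x ^ n \<le> norm (Ac a b p n) * r ^ n"
      using assms by (intro mult_left_mono power_mono) auto
    show "0 < (1 - r) ^ n" using assms by simp
    show "(1 - r) ^ n \<le> norm (qpoch x p n)" using assms by (intro qpoch_lower) auto
  next
    have "0 \<le> r" using assms(2) norm_ge_zero[of x] by linarith
    thus "0 \<le> norm (Ac a b p n) * r ^ n" by simp
  qed
  also have "\<dots> = norm (Ac a b p n) * (r / (1 - r)) ^ n" by (simp add: power_divide)
  finally show ?thesis .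
qed

lemma summable_uu:
  assumes "norm p < 1" "norm x < 1"
  shows "summable (uu a b p x)"
  by (rule summable_comparison_test'[OF M_summable[of p "norm x / (1 - norm x)"]])
     (use assms in \<open>auto intro: uu_bound\<close>)


lemma FF_cont:
  assumes "norm p < 1" "0 \<le> r" "r < 1"
  shows "continuous_on (cball 0 r) (FF a b p)"
proof -
  have ul: "uniform_limit (cball 0 r) (\<lambda>n x. \<Sum>i<n. uu a b p x i)
             (\<lambda>x. suminf (\<lambda>i. uu a b p x i)) sequentially"
    by (rule Weierstrass_m_test[where M = "\<lambda>n. norm (Ac a b p n) * (r / (1 - r)) ^ n"])
       (use assms in \<open>auto intro: uu_bound M_summable\<close>)
  have c: "continuous_on (cball 0 r) (\<lambda>x. \<Sum>i<n. uu a b p x i)" for n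
  proof -
    have "\<forall>x\<in>cball 0 r. qpoch x p i \<noteq> 0" for i
    proof
      fix x :: complex assume "x \<in> cball 0 r"
      hence "norm x < 1" using assms by auto
      thus "qpoch x p i \<noteq> 0" using assms by (intro qpoch_nz2)
    qed
    moreover have "continuous_on (cball 0 r) (\<lambda>x. qpoch x p i)" for i
      unfolding qpoch_def by (intro continuous_intros)
    ultimately show ?thesis unfolding uu_def
      by (intro continuous_intros) auto
  qed
  have "continuous_on (cball 0 r) (\<lambda>x. suminf (\<lambda>i. uu a b p x i))"
    by (rule uniform_limit_theorem[OF _ ul]) (use c in auto)
  thus ?thesis unfolding FF_def by simp
qed

lemma FF_0: "FF a b p 0 = 1"
proof -
  have "uu a b p 0 = (\<lambda>n. if n = 0 then (\<lambda>_. 1) n else 0)"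
    by (auto simp: uu_def Ac_def fun_eq_iff)
  hence "uu a b p 0 sums 1" using sums_single[of 0 "\<lambda>_. (1::complex)"] by simp
  thus ?thesis unfolding FF_def by (rule sums_unique[symmetric])
qed

lemma alg_id:
  fixes a b p x X U :: complex
  assumes "a * b = p" "1 - x \<noteq> 0" "1 - x * p \<noteq> 0" "1 - x * X \<noteq> 0" "1 - x * p * X \<noteq> 0"
    "1 - p^2 * X^2 \<noteq> 0"
  shows "(1 - x) * (1 - x * p) * U - (1 - a * x) * (1 - b * x) *
           (U * (X^2 * (1 - x) * (1 - x * p) / ((1 - x * X) * (1 - x * p * X))))
       = - (1 - (p * X)^2) * (1 - x) * (1 - x * p) / (1 - x * (p * X)) *
           (U * ((1 - a * X) * (1 - b * X) * X * x / ((1 - p^2 * X^2) * (1 - x * X))))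
         - (- (1 - X^2) * (1 - x) * (1 - x * p) / (1 - x * X) * U)"
proof -
  have e: "1 - x * (p * X) \<noteq> 0" using assms by (simp add: mult.assoc)
  have e2: "1 - (p * X)^2 = 1 - p^2 * X^2" by (simp add: power_mult_distrib)
  have e3: "x * (p * X) = x * p * X" by (simp add: mult.assoc)
  have h1: "(1 - x) * inverse (1 - x) = 1" using assms by simp
  have h2: "(1 - x * p) * inverse (1 - x * p) = 1" using assms by simp
  have h3: "(1 - x * X) * inverse (1 - x * X) = 1" using assms by simp
  have h4: "(1 - x * p * X) * inverse (1 - x * p * X) = 1" using assms by simp
  have h5: "(1 - p^2 * X^2) * inverse (1 - p^2 * X^2) = 1" using assms by simp
  show ?thesis unfolding e2 e3 divide_inverse inverse_mult_distrib
    using h1 h2 h3 h4 h5 assms(1) by algebra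
qed


lemma FF_fe:
  assumes p: "norm p < 1" and ab: "a * b = p" and x: "norm x < 1"
  shows "(1 - x) * (1 - x * p) * FF a b p x = (1 - a * x) * (1 - b * x) * FF a b p (x * p^2)"
proof -
  define U where "U n = uu a b p x n" for n
  define G where "G n = - (1 - (p ^ n)^2) * (1 - x) * (1 - x * p) / (1 - x * p ^ n) * U n" for n
  have xp2: "norm (x * p^2) < 1"
  proof -
    have "norm (x * p^2) = norm x * norm p ^ 2" by (simp add: norm_mult norm_power)
    also have "\<dots> \<le> norm x * 1" using p by (intro mult_left_mono) (auto simp: power_le_one)
    finally show ?thesis using x by simp
  qed
  have step: "(1 - x) * (1 - x * p) * U n - (1 - a * x) * (1 - b * x) * uu a b p (x * p^2) n
              = G (Suc n) - G n" for n
  proof -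
    have nz: "qpoch x p (Suc (Suc n)) \<noteq> 0" using p x by (intro qpoch_nz2)
    hence nz1: "1 - x * p ^ n \<noteq> 0" "1 - x * p * p ^ n \<noteq> 0"
      by (auto simp: qpoch_Suc mult.assoc)
    have nz2: "1 - x \<noteq> 0" "1 - x * p \<noteq> 0" using nz by (auto simp: qpoch_shift2)
    have "norm (p^2) < 1" using p by (simp add: norm_power power_less_one_iff)
    hence "qpoch (p^2) (p^2) (Suc n) \<noteq> 0" by (intro qpoch_nz2)
    hence nz3: "1 - p^2 * (p ^ n)^2 \<noteq> 0" by (simp add: qpoch_Suc power_mult[symmetric] mult.commute)
    have e1: "(p^2)^n = (p^n)^2" by (simp add: power_mult[symmetric] mult.commute)
    have e2: "p ^ Suc n = p * p ^ n" by simp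
    show ?thesis
      unfolding G_def U_def uu_shift[OF p x] uu_Suc[OF p x] e1 e2
      by (rule alg_id[OF ab nz2 nz1 nz3])
  qed
  have sU: "summable U" unfolding U_def using p x by (rule summable_uu)
  have U0: "U \<longlonglongrightarrow> 0" by (rule summable_LIMSEQ_zero[OF sU])
  have "(\<lambda>n. - (1 - (p ^ n)^2) * (1 - x) * (1 - x * p) / (1 - x * p ^ n) * U n)
        \<longlonglongrightarrow> - (1 - 0^2) * (1 - x) * (1 - x * p) / (1 - x * 0) * 0"
    by (intro tendsto_intros U0 LIMSEQ_power_zero p) simp
  hence G0: "G \<longlonglongrightarrow> 0" unfolding G_def by simp
  have "(\<lambda>n. G (Suc n) - G n) sums (0 - G 0)" by (rule telescope_sums[OF G0])
  hence s1: "(\<lambda>n. (1 - x) * (1 - x * p) * U n - (1 - a * x) * (1 - b * x) * uu a b p (x * p^2) n) sums 0"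
    unfolding step by (simp add: G_def)
  have s2: "(\<lambda>n. (1 - x) * (1 - x * p) * U n - (1 - a * x) * (1 - b * x) * uu a b p (x * p^2) n)
     sums ((1 - x) * (1 - x * p) * FF a b p x - (1 - a * x) * (1 - b * x) * FF a b p (x * p^2))"
    unfolding FF_def U_def
    by (intro sums_diff sums_mult summable_sums summable_uu p x xp2)
  from sums_unique2[OF s1 s2] show ?thesis by simp
qed


lemma norm_mult_pow_lt:
  fixes c p :: complex
  assumes "norm c < 1" "norm p < 1"
  shows "norm (c * p ^ k) < 1"
proof -
  have "norm (c * p ^ k) = norm c * norm p ^ k" by (simp add: norm_mult norm_power)
  also have "\<dots> \<le> norm c * 1" using assms by (intro mult_left_mono) (auto simp: power_le_one)
  finally show ?thesis using assms by simp
qed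

lemma norm_mult_pow_le:
  fixes c p :: complex
  assumes "norm p < 1"
  shows "norm (c * p ^ k) \<le> norm c"
proof -
  have "norm (c * p ^ k) = norm c * norm p ^ k" by (simp add: norm_mult norm_power)
  also have "\<dots> \<le> norm c * 1" using assms by (intro mult_left_mono) (auto simp: power_le_one)
  finally show ?thesis by simp
qed

lemma FF_iter:
  assumes p: "norm p < 1" and ab: "a * b = p" and c: "norm c < 1"
  shows "FF a b p c = qpoch (a * c) (p^2) N * qpoch (b * c) (p^2) N / qpoch c p (2 * N)
                      * FF a b p (c * (p^2) ^ N)"
proof (induction N)
  case 0 then show ?case by simp
next
  case (Suc N)
  define x where "x = c * (p^2) ^ N"
  have p2: "norm (p^2) < 1" using p by (simp add: norm_power power_less_one_iff)
  have x1: "norm x < 1" unfolding x_def using c p2 by (rule norm_mult_pow_lt)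
  have nzq: "qpoch c p (2 * Suc N) \<noteq> 0" using c p by (intro qpoch_nz2)
  have eq2: "qpoch c p (2 * Suc N) = qpoch c p (2 * N) * (1 - x) * (1 - x * p)"
  proof -
    have e: "(p^2)^N = (p^N)^2" by (simp add: power_mult[symmetric] mult.commute)
    show ?thesis unfolding x_def e by (simp add: qpoch_Suc power_mult mult_ac)
  qed
  have nz: "qpoch c p (2 * N) \<noteq> 0" "1 - x \<noteq> 0" "1 - x * p \<noteq> 0" using nzq unfolding eq2 by auto
  have fe: "FF a b p x = (1 - a * x) * (1 - b * x) / ((1 - x) * (1 - x * p)) * FF a b p (x * p^2)"
  proof -
    have d: "(1 - x) * (1 - x * p) \<noteq> 0" using nz by simp
    have "FF a b p x = ((1 - a * x) * (1 - b * x) * FF a b p (x * p^2)) / ((1 - x) * (1 - x * p))"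
      using FF_fe[OF p ab x1] d by (simp add: eq_divide_eq ac_simps)
    thus ?thesis by simp
  qed
  have ea: "qpoch (a * c) (p^2) (Suc N) = qpoch (a * c) (p^2) N * (1 - a * x)"
    unfolding x_def by (simp add: qpoch_Suc mult_ac)
  have eb: "qpoch (b * c) (p^2) (Suc N) = qpoch (b * c) (p^2) N * (1 - b * x)"
    unfolding x_def by (simp add: qpoch_Suc mult_ac)
  have ex: "c * (p^2) ^ Suc N = x * p^2" unfolding x_def by (simp add: mult_ac)
  have "FF a b p c = qpoch (a * c) (p^2) N * qpoch (b * c) (p^2) N / qpoch c p (2 * N) * FF a b p x"
    using Suc.IH unfolding x_def .
  also have "\<dots> = qpoch (a * c) (p^2) N * qpoch (b * c) (p^2) N / qpoch c p (2 * N) *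
      ((1 - a * x) * (1 - b * x) / ((1 - x) * (1 - x * p)) * FF a b p (x * p^2))"
    unfolding fe ..
  also have "\<dots> = qpoch (a * c) (p^2) (Suc N) * qpoch (b * c) (p^2) (Suc N) / qpoch c p (2 * Suc N)
                      * FF a b p (c * (p^2) ^ Suc N)"
    unfolding ea eb eq2 ex by (simp add: divide_inverse inverse_mult_distrib ac_simps)
  finally show ?case .
qed


lemma FF_closed:
  assumes p: "norm p < 1" and ab: "a * b = p" and c: "norm c < 1"
  shows "FF a b p c = qpoch_inf (a * c) (p^2) * qpoch_inf (b * c) (p^2) / qpoch_inf c p"
proof -
  have p2: "norm (p^2) < 1" using p by (simp add: norm_power power_less_one_iff)
  have g: "(\<lambda>N. c * (p^2) ^ N) \<longlonglongrightarrow> c * 0" by (intro tendsto_intros LIMSEQ_power_zero p2)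
  have "(\<lambda>N. FF a b p (c * (p^2) ^ N)) \<longlonglongrightarrow> FF a b p 0"
    by (rule continuous_on_tendsto_compose[OF FF_cont[OF p norm_ge_zero c]])
       (use g norm_mult_pow_le[OF p2] in auto)
  hence l1: "(\<lambda>N. FF a b p (c * (p^2) ^ N)) \<longlonglongrightarrow> 1" by (simp add: FF_0)
  have sm: "strict_mono (\<lambda>N::nat. 2 * N)" by (auto simp: strict_mono_def)
  have lc: "(\<lambda>N. qpoch c p (2 * N)) \<longlonglongrightarrow> qpoch_inf c p"
    using LIMSEQ_subseq_LIMSEQ[OF qpoch_lim[OF p] sm] by (simp add: o_def)
  have nzc: "qpoch_inf c p \<noteq> 0"
  proof (rule qpoch_inf_nz[OF p])
    fix k show "c * p ^ k \<noteq> 1" using norm_mult_pow_lt[OF c p, of k] by auto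
  qed
  have "(\<lambda>N. qpoch (a * c) (p^2) N * qpoch (b * c) (p^2) N / qpoch c p (2 * N)
               * FF a b p (c * (p^2) ^ N))
        \<longlonglongrightarrow> qpoch_inf (a * c) (p^2) * qpoch_inf (b * c) (p^2) / qpoch_inf c p * 1"
    by (intro tendsto_intros qpoch_lim p2 lc nzc l1)
  hence "(\<lambda>N. FF a b p c) \<longlonglongrightarrow> qpoch_inf (a * c) (p^2) * qpoch_inf (b * c) (p^2) / qpoch_inf c p"
    unfolding FF_iter[OF p ab c, symmetric] by simp
  thus ?thesis by (rule LIMSEQ_unique[OF tendsto_const])
qed


lemma qpoch_double:
  fixes x y :: complex
  shows "qpoch x y (2 * n) = qpoch x (y^2) n * qpoch (x * y) (y^2) n"
proof (induction n)
  case 0 then show ?case by simp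
next
  case (Suc n)
  have "qpoch x y (2 * Suc n) = qpoch x y (2 * n) * (1 - x * y ^ (2 * n)) * (1 - x * y ^ (Suc (2 * n)))"
    by (simp add: qpoch_Suc)
  also have "\<dots> = qpoch x (y^2) (Suc n) * qpoch (x * y) (y^2) (Suc n)"
  proof -
    have e: "(y^2)^n = (y^n)^2" by (simp add: power_mult[symmetric] mult.commute)
    show ?thesis unfolding Suc by (simp add: qpoch_Suc power_mult e mult_ac)
  qed
  finally show ?case .
qed

lemma exp_id:
  fixes n :: nat
  shows "4 * (n * (n - 1) div 2) + 2 * n = 2 * n^2"
proof (induction n)
  case 0 then show ?case by simp
next
  case (Suc n)
  have "4 * (Suc n * (Suc n - 1) div 2) + 2 * Suc n = (4 * (n * (n - 1) div 2) + 2 * n) + 4 * n + 2"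
    unfolding tri_Suc by simp
  also have "\<dots> = 2 * (Suc n)^2" unfolding Suc by (simp add: power2_eq_square)
  finally show ?case .
qed

lemma term_eq:
  fixes q :: complex
  shows "uu q (q^3) (q^4) (-(q^2)) n = (-1) ^ n * qpoch q (q^2) (2*n) * q ^ (2*n^2)
              / (qpoch (q^8) (q^8) n * qpoch (-(q^2)) (q^4) n)"
proof -
  have d: "qpoch q (q^2) (2*n) = qpoch q (q^4) n * qpoch (q^3) (q^4) n"
    using qpoch_double[of q "q^2" n] by (simp add: power_mult[symmetric] power_Suc[symmetric] mult.commute)
  have e8: "(q^4)^2 = (q^8::complex)" by (simp add: power_mult[symmetric])
  have ex: "(q^4) ^ (n * (n - 1) div 2) * (-(q^2)) ^ n = (-1) ^ n * q ^ (2 * n^2)"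
  proof -
    have "(q^4) ^ (n * (n - 1) div 2) * (-(q^2)) ^ n
          = (-1) ^ n * q ^ (4 * (n * (n - 1) div 2) + 2 * n)"
    proof -
      have "(-(q^2)) ^ n = (-1) ^ n * (q^2) ^ n" by (rule power_minus)
      thus ?thesis by (simp add: power_mult[symmetric] power_add mult_ac)
    qed
    thus ?thesis unfolding exp_id .
  qed
  show ?thesis unfolding uu_def Ac_def d e8
    by (simp add: ex[symmetric] mult_ac)
qed


lemma prod_id:
  fixes q :: complex
  shows "qpoch (q^8) (q^8) N * qpoch (q^2) (q^4) N * qpoch (-(q^2)) (q^4) N = qpoch (q^4) (q^4) (2 * N)"
proof (induction N)
  case 0 then show ?case by simp
next
  case (Suc N)
  define t where "t = (q^4)^N"
  have e1: "(q^8)^N = t^2" unfolding t_def by (simp add: power_mult[symmetric] mult.commute)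
  have e2: "(q^4)^(N*2) = t^2" unfolding t_def by (simp add: power_mult)
  have "qpoch (q^8) (q^8) (Suc N) * qpoch (q^2) (q^4) (Suc N) * qpoch (-(q^2)) (q^4) (Suc N)
      = (qpoch (q^8) (q^8) N * qpoch (q^2) (q^4) N * qpoch (-(q^2)) (q^4) N) *
        ((1 - q^8 * t^2) * (1 - q^2 * t) * (1 + q^2 * t))"
    by (simp add: qpoch_Suc e1 t_def[symmetric] mult_ac)
  also have "\<dots> = qpoch (q^4) (q^4) (2 * N) * ((1 - q^4 * t^2) * (1 - q^4 * (q^4 * t^2)))"
    unfolding Suc by algebra
  also have "\<dots> = qpoch (q^4) (q^4) (2 * Suc N)"
    by (simp add: qpoch_Suc e2 mult_ac)
  finally show ?case .
qed


theorem mainTheorem7: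
  fixes q :: complex
  assumes "norm q < 1"
  shows "(\<lambda>n. (-1) ^ n * qpoch q (q^2) (2*n) * q ^ (2*n^2)
              / (qpoch (q^8) (q^8) n * qpoch (-(q^2)) (q^4) n))
         sums (qpoch_inf (-(q^3)) (q^8) * qpoch_inf (-(q^5)) (q^8) * qpoch_inf (q^8) (q^8)
               * qpoch_inf (q^2) (q^4) / qpoch_inf (q^4) (q^4))"
proof -
  have nq: "norm q \<le> 1" using assms by simp
  have p: "norm (q^4) < 1" using assms by (simp add: norm_power power_less_one_iff)
  have p8: "norm (q^8) < 1" using assms by (simp add: norm_power power_less_one_iff)
  have p2: "norm (q^2) < 1" using assms by (simp add: norm_power power_less_one_iff)
  have c: "norm (-(q^2)) < 1" using p2 by simp
  have ab: "q * q^3 = q^4" by (simp add: power_Suc[symmetric] del: power_Suc)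
  have fe: "(\<lambda>n. (-1) ^ n * qpoch q (q^2) (2*n) * q ^ (2*n^2)
              / (qpoch (q^8) (q^8) n * qpoch (-(q^2)) (q^4) n)) = uu q (q^3) (q^4) (-(q^2))"
    by (rule ext) (rule term_eq[symmetric])
  have s: "uu q (q^3) (q^4) (-(q^2)) sums FF q (q^3) (q^4) (-(q^2))"
    unfolding FF_def by (rule summable_sums[OF summable_uu[OF p c]])
  have e1: "q * -(q^2) = -(q^3)" by (simp add: power_Suc[symmetric] del: power_Suc)
  have e2: "q^3 * -(q^2) = -(q^5)" by (simp add: power_add[symmetric])
  have e3: "(q^4)^2 = (q^8::complex)" by (simp add: power_mult[symmetric])
  have cl: "FF q (q^3) (q^4) (-(q^2)) =
      qpoch_inf (-(q^3)) (q^8) * qpoch_inf (-(q^5)) (q^8) / qpoch_inf (-(q^2)) (q^4)"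
    using FF_closed[OF p ab c] unfolding e1 e2 e3 .
  have sm: "strict_mono (\<lambda>N::nat. 2 * N)" by (auto simp: strict_mono_def)
  have l4: "(\<lambda>N. qpoch (q^4) (q^4) (2 * N)) \<longlonglongrightarrow> qpoch_inf (q^4) (q^4)"
    using LIMSEQ_subseq_LIMSEQ[OF qpoch_lim[OF p] sm] by (simp add: o_def)
  have l: "(\<lambda>N. qpoch (q^8) (q^8) N * qpoch (q^2) (q^4) N * qpoch (-(q^2)) (q^4) N)
      \<longlonglongrightarrow> qpoch_inf (q^8) (q^8) * qpoch_inf (q^2) (q^4) * qpoch_inf (-(q^2)) (q^4)"
    by (intro tendsto_intros qpoch_lim p p8)
  have pid: "qpoch_inf (q^8) (q^8) * qpoch_inf (q^2) (q^4) * qpoch_inf (-(q^2)) (q^4) = qpoch_inf (q^4) (q^4)"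
    using LIMSEQ_unique[OF l l4[folded prod_id]] .
  have nz4: "qpoch_inf (q^4) (q^4) \<noteq> 0"
  proof (rule qpoch_inf_nz[OF p])
    fix k show "q^4 * (q^4) ^ k \<noteq> 1" using norm_mult_pow_lt[OF p p, of k] by auto
  qed
  have nz2: "qpoch_inf (-(q^2)) (q^4) \<noteq> 0"
  proof (rule qpoch_inf_nz[OF p])
    fix k show "-(q^2) * (q^4) ^ k \<noteq> 1" using norm_mult_pow_lt[OF c p, of k] by (metis norm_one less_irrefl)
  qed
  have nz: "qpoch_inf (q^8) (q^8) * qpoch_inf (q^2) (q^4) \<noteq> 0" using nz4 unfolding pid[symmetric] by auto
  have val: "FF q (q^3) (q^4) (-(q^2)) = qpoch_inf (-(q^3)) (q^8) * qpoch_inf (-(q^5)) (q^8) * qpoch_inf (q^8) (q^8)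
               * qpoch_inf (q^2) (q^4) / qpoch_inf (q^4) (q^4)"
    unfolding cl pid[symmetric] using nz nz2 by (simp add: field_simps)
  show ?thesis unfolding fe val[symmetric] by (rule s)
qed

end
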